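(* Let $X$ and $Y$ be non-negative absolutely continuous random variables with survival functions $\bar F$, $\bar G$ and hazard rates $h_1(t)=f(t)/\bar F(t)$, $h_2(t)=g(t)/\bar G(t)$, where $f,g$ are their densities, and let $\alpha,\beta>0$. Define, for $t\ge 0$ with $\bar F(t),\bar G(t)>0$, $$R_{\alpha,\beta}(\bar F,\bar G,t)=\int_t^\infty\left(\frac{\bar F(x)}{\bar F(t)}\right)^{\alpha}\left(\frac{\bar G(x)}{\bar G(t)}\right)^{\beta}dx$$ (assumed finite). Then $$\frac{d}{dt}R_{\alpha,\beta}(\bar F,\bar G,t)=\big(\beta h_2(t)+\alpha h_1(t)\big)R_{\alpha,\beta}(\bar F,\bar G,t)-1.$$
   Context: $R_{\alpha,\beta}(\bar F,\bar G,t)$ is the dynamic relative cumulative residual information (DRCRI) measure between the residual lives $X_t=(X-t\mid X>t)$ and $Y_t=(Y-t\mid Y>t)$. *)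

theory Defs
  imports "HOL-Probability.Probability"
begin

definition survival :: "'a measure \<Rightarrow> ('a \<Rightarrow> real) \<Rightarrow> real \<Rightarrow> real" where
  "survival M X x = measure M {\<omega> \<in> space M. x < X \<omega>}"

definition hazard :: "(real \<Rightarrow> real) \<Rightarrow> (real \<Rightarrow> real) \<Rightarrow> real \<Rightarrow> real" where
  "hazard f Fbar t = f t / Fbar t"

definition DRCRI :: "real \<Rightarrow> real \<Rightarrow> (real \<Rightarrow> real) \<Rightarrow> (real \<Rightarrow> real) \<Rightarrow> real \<Rightarrow> real" where
  "DRCRI \<alpha> \<beta> Fbar Gbar t =
     integral {t..} (\<lambda>x. (Fbar x / Fbar t) powr \<alpha> * (Gbar x / Gbar t) powr \<beta>)"

end

theory Submission
  imports Defs
begin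

lemma surv_eq:
  fixes X :: "'a \<Rightarrow> real"
  assumes P: "prob_space M" and D: "distributed M lborel X (\<lambda>x. ennreal (f x))"
    and nn: "\<And>x. 0 \<le> f x"
  shows "integrable lborel f" "survival M X s = integral {s..} f"
proof -
  have fm[measurable]: "f \<in> borel_measurable lborel"
    by (rule distributed_real_measurable[OF _ D]) (simp add: nn)
  have "integrable M (\<lambda>_. 1::real)"
    by (rule finite_measure.integrable_const[OF prob_space.finite_measure[OF P]])
  then show fi: "integrable lborel f"
  proof -
    have "integrable lborel (\<lambda>x. f x * 1) = integrable M (\<lambda>x. 1::real)"
      by (rule distributed_integrable[OF D]) (simp_all add: nn)
    with \<open>integrable M (\<lambda>_. 1::real)\<close> show ?thesis by simp
  qed
  have "survival M X s = measure M (X -` {s<..} \<inter> space M)"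
    unfolding survival_def by (rule arg_cong[where f="measure M"]) blast
  also have "\<dots> = enn2real (emeasure M (X -` {s<..} \<inter> space M))"
    by (simp add: measure_def)
  also have "\<dots> = enn2real (\<integral>\<^sup>+x. ennreal (f x) * indicator {s<..} x \<partial>lborel)"
    using distributed_emeasure[OF D, of "{s<..}"] by simp
  also have "\<dots> = (LINT x|lborel. f x * indicator {s<..} x)"
  proof (rule enn2real_nn_integral_eq_integral)
    show "AE x in lborel. ennreal (f x) * indicator {s<..} x = ennreal (f x * indicator {s<..} x)"
      by (intro AE_I2) (simp add: indicator_def)
    show "AE x in lborel. 0 \<le> f x * indicator {s<..} x"
      by (intro AE_I2) (simp add: nn)
  qed measurable
  also have "\<dots> = (LINT x:{s<..}|lborel. f x)"
    by (simp add: set_lebesgue_integral_def mult.commute)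
  also have "\<dots> = integral {s<..} f"
  proof (rule set_borel_integral_eq_integral)
    show "set_integrable lborel {s<..} f"
      unfolding set_integrable_def using integrable_real_mult_indicator[OF _ fi, of "{s<..}"]
      by (simp add: mult.commute)
  qed
  also have "\<dots> = integral {s..} f"
  proof (rule integral_subset_negligible)
    have "{s..} - {s<..} = {s}" by auto
    then show "negligible ({s..} - {s<..})" by simp
  qed auto
  finally show "survival M X s = integral {s..} f" .
qed

lemma abs_int_sub:
  fixes h :: "real \<Rightarrow> real"
  assumes "h absolutely_integrable_on {a..}" "a \<le> c"
  shows "h absolutely_integrable_on {c..}" "h absolutely_integrable_on {c..d}"
proof -
  have m1: "{c::real..} \<in> sets lebesgue" "{c..d::real} \<in> sets lebesgue"
    by (intro sets_completionI_sets, simp)+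
  show "h absolutely_integrable_on {c..}"
    by (rule set_integrable_subset[OF assms(1) m1(1)]) (use assms(2) in auto)
  show "h absolutely_integrable_on {c..d}"
    by (rule set_integrable_subset[OF assms(1) m1(2)]) (use assms(2) in auto)
qed

lemma tail_split:
  fixes h :: "real \<Rightarrow> real"
  assumes A: "h absolutely_integrable_on {a..}" and "a \<le> s"
  shows "integral {s..} h = integral {a..} h - integral {a..s} h"
proof -
  have i1: "h integrable_on {s..}" "h integrable_on {a..s}"
    using abs_int_sub[OF A, of a] abs_int_sub[OF A \<open>a \<le> s\<close>] set_lebesgue_integral_eq_integral(1)
    by auto
  have "(h has_integral (integral {a..s} h + integral {s..} h)) ({a..s} \<union> {s..})"
  proof (rule has_integral_Un)
    have "{a..s} \<inter> {s..} = {s}" using \<open>a \<le> s\<close> by auto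
    then show "negligible ({a..s} \<inter> {s..})" by simp
  qed (use i1 in auto)
  moreover have "{a..s} \<union> {s..} = {a..}" using \<open>a \<le> s\<close> by auto
  ultimately have "integral {a..} h = integral {a..s} h + integral {s..} h"
    by (simp add: integral_unique)
  then show ?thesis by simp
qed

lemma cont_tail:
  fixes h :: "real \<Rightarrow> real"
  assumes A: "h absolutely_integrable_on {a..}" and ax: "a < x"
  shows "isCont (\<lambda>s. integral {s..} h) x"
proof -
  have "h integrable_on {a..x+1}"
    using abs_int_sub(2)[OF A, of a "x+1"] set_lebesgue_integral_eq_integral(1) by blast
  then have c1: "continuous_on {a..x+1} (\<lambda>u. integral {a..u} h)"
    by (rule indefinite_integral_continuous_1)
  have "x \<in> interior {a..x+1}" using ax by simp
  then have "isCont (\<lambda>u. integral {a..u} h) x"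
    by (rule continuous_on_interior[OF c1])
  then have c2: "isCont (\<lambda>u. integral {a..} h - integral {a..u} h) x"
    by (intro continuous_diff continuous_const)
  have ev: "\<forall>\<^sub>F u in nhds x. integral {a..} h - integral {a..u} h = integral {u..} h"
  proof (rule eventually_mono[OF eventually_nhds_in_open[of "{a<..}" x]])
    fix u assume "u \<in> {a<..}"
    then show "integral {a..} h - integral {a..u} h = integral {u..} h"
      using tail_split[OF A, of u] by simp
  qed (use ax in auto)
  show ?thesis using c2 isCont_cong[OF ev] by simp
qed

lemma deriv_tail:
  fixes h :: "real \<Rightarrow> real"
  assumes A: "h absolutely_integrable_on {a..}" and at: "a < t" and c: "isCont h t"
  shows "((\<lambda>s. integral {s..} h) has_real_derivative - h t) (at t)"
proof -
  have hi: "h integrable_on {a..t+1}"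
    using abs_int_sub(2)[OF A, of a "t+1"] set_lebesgue_integral_eq_integral(1) by blast
  have tin: "t \<in> {a..t+1} - {}" using at by simp
  have "continuous (at t within ({a..t+1} - {})) h"
    using c by (rule continuous_at_imp_continuous_within)
  then have "((\<lambda>u. integral {a..u} h) has_vector_derivative h t) (at t within ({a..t+1} - {}))"
    by (rule integral_has_vector_derivative_continuous_at[OF hi tin finite.emptyI])
  moreover have "at t within ({a..t+1} - {}) = at t"
    using at_within_Icc_at[of a t "t+1"] at by simp
  ultimately have "((\<lambda>u. integral {a..u} h) has_real_derivative h t) (at t)"
    by (simp add: has_real_derivative_iff_has_vector_derivative)
  then have "((\<lambda>u. integral {a..} h - integral {a..u} h) has_real_derivative 0 - h t) (at t)"
    by (intro DERIV_diff DERIV_const)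
  then have "((\<lambda>u. integral {a..} h - integral {a..u} h) has_real_derivative - h t) (at t)"
    by simp
  then show ?thesis
  proof (rule has_field_derivative_transform_within_open[where S="{a<..}"])
    fix u :: real assume "u \<in> {a<..}"
    then show "integral {a..} h - integral {a..u} h = integral {u..} h"
      using tail_split[OF A, of u] by simp
  qed (use at in auto)
qed


theorem mainTheorem2:
  fixes M :: "'a measure" and X Y :: "'a \<Rightarrow> real" and f g :: "real \<Rightarrow> real"
    and \<alpha> \<beta> t :: real
  assumes "prob_space M"
    and "distributed M lborel X (\<lambda>x. ennreal (f x))"
    and "distributed M lborel Y (\<lambda>x. ennreal (g x))"
    and "\<And>x. 0 \<le> f x" and "\<And>x. 0 \<le> g x"
    and "AE \<omega> in M. 0 \<le> X \<omega>" and "AE \<omega> in M. 0 \<le> Y \<omega>"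
    and "\<alpha> > 0" and "\<beta> > 0" and "t \<ge> 0"
    and "survival M X t > 0" and "survival M Y t > 0"
    and "isCont f t" and "isCont g t"
    and "(\<lambda>x. (survival M X x / survival M X t) powr \<alpha> *
              (survival M Y x / survival M Y t) powr \<beta>) integrable_on {t..}"
  shows "((\<lambda>s. DRCRI \<alpha> \<beta> (survival M X) (survival M Y) s) has_real_derivative
           ((\<beta> * hazard g (survival M Y) t + \<alpha> * hazard f (survival M X) t)
              * DRCRI \<alpha> \<beta> (survival M X) (survival M Y) t - 1)) (at t)"
proof -
  note P = assms(1)
  define F where "F = survival M X"
  define G where "G = survival M Y"
  have Fi: "integrable lborel f" and Feq: "\<And>s. F s = integral {s..} f"
    using surv_eq[OF P assms(2) assms(4)] unfolding F_def by auto
  have Gi: "integrable lborel g" and Geq: "\<And>s. G s = integral {s..} g"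
    using surv_eq[OF P assms(3) assms(5)] unfolding G_def by auto
  have Fnn: "\<And>s. 0 \<le> F s" unfolding F_def survival_def by simp
  have Gnn: "\<And>s. 0 \<le> G s" unfolding G_def survival_def by simp
  have Ft: "F t > 0" and Gt: "G t > 0" using assms(11,12) unfolding F_def G_def by auto
  have ai: "h absolutely_integrable_on {a..}"
    if "integrable lborel h" "\<And>x. 0 \<le> h x" for h :: "real \<Rightarrow> real" and a
  proof (rule nonnegative_absolutely_integrable_1)
    show "h integrable_on {a..}"
    proof (rule set_borel_integral_eq_integral(1))
      show "set_integrable lborel {a..} h"
        unfolding set_integrable_def using integrable_real_mult_indicator[OF _ that(1), of "{a..}"]
        by (simp add: mult.commute)
    qed
  qed (use that in auto)
  have Fai: "\<And>a. f absolutely_integrable_on {a..}" using ai[OF Fi assms(4)] .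
  have Gai: "\<And>a. g absolutely_integrable_on {a..}" using ai[OF Gi assms(5)] .
  have Fc: "isCont F x" for x
    unfolding Feq[abs_def] by (rule cont_tail[OF Fai, of "x-1"]) simp
  have Gc: "isCont G x" for x
    unfolding Geq[abs_def] by (rule cont_tail[OF Gai, of "x-1"]) simp
  have dF: "(F has_real_derivative - f t) (at t)"
    unfolding Feq[abs_def] by (rule deriv_tail[OF Fai, of "t-1"]) (use assms(13) in auto)
  have dG: "(G has_real_derivative - g t) (at t)"
    unfolding Geq[abs_def] by (rule deriv_tail[OF Gai, of "t-1"]) (use assms(14) in auto)
  define \<phi> where "\<phi> x = F x powr \<alpha> * G x powr \<beta>" for x
  have Fpc: "isCont (\<lambda>x. F x powr \<alpha>) x" for x
    unfolding isCont_def
    by (rule tendsto_powr'[OF Fc[unfolded isCont_def] tendsto_const]) (use assms(8) Fnn in auto)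
  have Gpc: "isCont (\<lambda>x. G x powr \<beta>) x" for x
    unfolding isCont_def
    by (rule tendsto_powr'[OF Gc[unfolded isCont_def] tendsto_const]) (use assms(9) Gnn in auto)
  have \<phi>c: "isCont \<phi> x" for x
    unfolding \<phi>_def[abs_def] by (rule continuous_mult[OF Fpc Gpc])
  have \<phi>nn: "\<And>x. 0 \<le> \<phi> x" unfolding \<phi>_def by simp
  define K where "K = F t powr \<alpha> * G t powr \<beta>"
  have Kpos: "K > 0" unfolding K_def using Ft Gt by simp
  have \<psi>eq: "(F x / F s) powr \<alpha> * (G x / G s) powr \<beta> = \<phi> x / (F s powr \<alpha> * G s powr \<beta>)" for x s
    unfolding \<phi>_def using Fnn Gnn by (simp add: powr_divide)
  have i1: "\<phi> integrable_on {t..}"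
  proof -
    from assms(15) have "(\<lambda>x. \<phi> x / K) integrable_on {t..}"
      using \<psi>eq[of _ t] unfolding F_def G_def K_def by simp
    then have "(\<lambda>x. \<phi> x / K * K) integrable_on {t..}"
      using has_integral_mult_left integrable_on_def by blast
    then show ?thesis using Kpos by simp
  qed
  have i2: "\<phi> integrable_on {t-1..t}"
    by (rule integrable_continuous_real) (use \<phi>c continuous_at_imp_continuous_on in blast)
  have \<phi>ai: "\<phi> absolutely_integrable_on {t-1..}"
  proof -
    have "\<phi> absolutely_integrable_on ({t-1..t} \<union> {t..})"
      by (rule set_integrable_Un) (use nonnegative_absolutely_integrable_1 i1 i2 \<phi>nn in auto)
    moreover have "{t-1..t} \<union> {t..} = {t-1..}" by auto
    ultimately show ?thesis by simp
  qed
  define H where "H s = integral {s..} \<phi>" for s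
  have dH: "(H has_real_derivative - \<phi> t) (at t)"
    unfolding H_def[abs_def] by (rule deriv_tail[OF \<phi>ai]) (use \<phi>c in auto)
  have Req: "DRCRI \<alpha> \<beta> F G s = H s / (F s powr \<alpha> * G s powr \<beta>)" for s
    unfolding DRCRI_def H_def \<psi>eq by (rule integral_divide)
  have dFp: "((\<lambda>s. F s powr \<alpha>) has_real_derivative
      F t powr \<alpha> * (0 * ln (F t) + (- f t) * \<alpha> / F t)) (at t)"
    by (rule DERIV_powr[OF dF Ft DERIV_const])
  have dGp: "((\<lambda>s. G s powr \<beta>) has_real_derivative
      G t powr \<beta> * (0 * ln (G t) + (- g t) * \<beta> / G t)) (at t)"
    by (rule DERIV_powr[OF dG Gt DERIV_const])
  have dD: "((\<lambda>s. F s powr \<alpha> * G s powr \<beta>) has_real_derivative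
      F t powr \<alpha> * (0 * ln (F t) + (- f t) * \<alpha> / F t) * G t powr \<beta>
      + G t powr \<beta> * (0 * ln (G t) + (- g t) * \<beta> / G t) * F t powr \<alpha>) (at t)"
    by (rule DERIV_mult[OF dFp dGp])
  have dR: "((\<lambda>s. H s / (F s powr \<alpha> * G s powr \<beta>)) has_real_derivative
      ((- \<phi> t) * K - H t * (F t powr \<alpha> * (0 * ln (F t) + (- f t) * \<alpha> / F t) * G t powr \<beta>
      + G t powr \<beta> * (0 * ln (G t) + (- g t) * \<beta> / G t) * F t powr \<alpha>)) / (K * K)) (at t)"
    unfolding K_def by (rule DERIV_divide[OF dH dD]) (use Kpos K_def in auto)
  have val: "((- \<phi> t) * K - H t * (F t powr \<alpha> * (0 * ln (F t) + (- f t) * \<alpha> / F t) * G t powr \<beta>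
      + G t powr \<beta> * (0 * ln (G t) + (- g t) * \<beta> / G t) * F t powr \<alpha>)) / (K * K)
      = (\<beta> * hazard g G t + \<alpha> * hazard f F t) * (H t / K) - 1"
    unfolding hazard_def \<phi>_def K_def using Ft Gt
    by (simp add: field_simps)
  show ?thesis
    unfolding F_def[symmetric] G_def[symmetric] Req
    using dR[unfolded val] unfolding K_def .
qed

end
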